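(* Let $p$ be a prime and let $r\geq 2$ be an integer with $p\nmid r$. For integers $e\geq 2$ let $S(p,e,r)$ be the smallest set of positive integers such that (a) $r\in S$; (b) $n\in S$ whenever $n^e\in S$; (c) $(n+p)^e\in S$ whenever $n\in S$. Then there exists an integer $e$ with $2\leq e\leq p-2$ such that $S(p,e,r)=\{n\geq 2: n\not\equiv 0\pmod p\}$ if and only if $p-1$ is not squarefree.
   Context: "Smallest" means contained in every set of positive integers satisfying (a), (b), (c). *)

theory Defs
  imports Main "HOL-Computational_Algebra.Squarefree"
begin

definition closed_set :: "nat \<Rightarrow> nat \<Rightarrow> nat \<Rightarrow> nat set \<Rightarrow> bool" where
  "closed_set p e r T \<longleftrightarrow>
     T \<subseteq> {n. n > 0} \<and> r \<in> T \<and>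
     (\<forall>n. n > 0 \<longrightarrow> n ^ e \<in> T \<longrightarrow> n \<in> T) \<and>
     (\<forall>n\<in>T. (n + p) ^ e \<in> T)"

definition S :: "nat \<Rightarrow> nat \<Rightarrow> nat \<Rightarrow> nat set" where
  "S p e r = \<Inter> {T. closed_set p e r T}"

end

theory Submission
  imports Defs "HOL-Number_Theory.Number_Theory"
begin

lemma S_lower: "closed_set p e r T \<Longrightarrow> S p e r \<subseteq> T"
  unfolding S_def by blast

lemma S_upper: "(\<And>T. closed_set p e r T \<Longrightarrow> A \<subseteq> T) \<Longrightarrow> A \<subseteq> S p e r"
  unfolding S_def by blast

lemma cong_plus_p: "[n + p = n] (mod (p::nat))"
  by (simp add: cong_def)

lemma S_sub_U:
  fixes p r e :: nat
  assumes "prime p" "r \<ge> 2" "\<not> p dvd r" "e \<ge> 1"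
  shows "S p e r \<subseteq> {n. n \<ge> 2 \<and> \<not> p dvd n}"
proof (rule S_lower)
  show "closed_set p e r {n. n \<ge> 2 \<and> \<not> p dvd n}"
    unfolding closed_set_def
  proof (intro conjI allI impI ballI)
    show "{n. n \<ge> 2 \<and> \<not> p dvd n} \<subseteq> {n. n > 0}" by auto
    show "r \<in> {n. n \<ge> 2 \<and> \<not> p dvd n}" using assms by auto
  next
    fix n :: nat assume n: "n > 0" "n ^ e \<in> {n. n \<ge> 2 \<and> \<not> p dvd n}"
    have "n \<noteq> 1" using n by auto
    moreover have "\<not> p dvd n" using n assms(1,4) by (auto simp: prime_dvd_power_iff)
    ultimately show "n \<in> {n. n \<ge> 2 \<and> \<not> p dvd n}" using n by auto
  next
    fix n :: nat assume n: "n \<in> {n. n \<ge> 2 \<and> \<not> p dvd n}"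
    have "n + p \<le> (n + p) ^ e" using assms(4) n by (intro self_le_power) auto
    moreover have "\<not> p dvd (n + p) ^ e" using n assms(1)
      by (subst prime_dvd_power_iff) (use assms(4) in auto)
    ultimately show "(n + p) ^ e \<in> {n. n \<ge> 2 \<and> \<not> p dvd n}" using n by auto
  qed
qed

lemma suff:
  fixes p r e :: nat
  assumes p: "prime p" and r: "r \<ge> 2" "\<not> p dvd r" and e: "e \<ge> 2" "(p - 1) dvd e * e"
    and T: "closed_set p e r T"
  shows "{n. n \<ge> 2 \<and> \<not> p dvd n} \<subseteq> T"
proof
  have Tpos: "T \<subseteq> {n. n > 0}" and rT: "r \<in> T"
    and root: "\<And>n. n > 0 \<Longrightarrow> n ^ e \<in> T \<Longrightarrow> n \<in> T"
    and pw: "\<And>n. n \<in> T \<Longrightarrow> (n + p) ^ e \<in> T"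
    using T unfolding closed_set_def by auto
  have plus: "n + p \<in> T" if "n \<in> T" for n
    using root[of "n + p"] pw[OF that] Tpos that by auto
  have plusk: "n + k * p \<in> T" if "n \<in> T" for n k
    using that
  proof (induction k)
    case 0 then show ?case by simp
  next
    case (Suc k)
    then show ?case using plus[of "n + k * p"] by (simp add: algebra_simps)
  qed
  have roots: "x \<in> T" if "x > 0" "x ^ (e ^ i) \<in> T" for x i
    using that
  proof (induction i arbitrary: x)
    case 0 then show ?case by simp
  next
    case (Suc i)
    have eq: "x ^ (e ^ Suc i) = (x ^ e) ^ (e ^ i)"
      by (simp only: power_Suc power_mult)
    have pos: "x ^ e > 0" using Suc.prems(1) by simp
    have "x ^ e \<in> T" using Suc.IH[OF pos] Suc.prems(2) unfolding eq by blast
    then show ?case using root Suc.prems(1) by blast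
  qed
  have fermat1: "[x ^ (e ^ j) = 1] (mod p)" if "\<not> p dvd x" "j \<ge> 2" for x j
  proof -
    have "e ^ j = (e * e) * e ^ (j - 2)" using that(2)
      by (metis le_add_diff_inverse power2_eq_square power_add)
    then obtain k where k: "e ^ j = (p - 1) * k" using e(2)
      by (metis dvd_def dvd_mult2)
    have "[(x ^ (p - 1)) ^ k = 1 ^ k] (mod p)"
      using fermat_theorem[OF p that(1)] cong_pow by blast
    then show ?thesis by (simp add: k power_mult)
  qed
  define c where "c = ((r + p) ^ e + p) ^ e"
  have cT: "c \<in> T" unfolding c_def using pw rT by blast
  have "[c = (r ^ e) ^ e] (mod p)"
  proof -
    have "[(r + p) ^ e = r ^ e] (mod p)" using cong_pow cong_plus_p by blast
    then have "[(r + p) ^ e + p = r ^ e] (mod p)" using cong_plus_p cong_trans by blast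
    then show ?thesis unfolding c_def using cong_pow by blast
  qed
  then have c1: "[c = 1] (mod p)"
    using fermat1[OF r(2), of 2] by (simp add: power_mult power2_eq_square cong_trans)
  fix n assume n: "n \<in> {n. n \<ge> 2 \<and> \<not> p dvd n}"
  define j where "j = c + 2"
  have "j < 2 ^ j" by (rule less_exp)
  then have "c < 2 ^ j" unfolding j_def by linarith
  also have "2 ^ j \<le> e ^ j" using e(1) by (intro power_mono) auto
  also have "e ^ j < 2 ^ (e ^ j)" by (rule less_exp)
  also have "2 ^ (e ^ j) \<le> n ^ (e ^ j)" using n by (intro power_mono) auto
  finally have cle: "c \<le> n ^ (e ^ j)" by simp
  have "j \<ge> 2" unfolding j_def by simp
  then have n1: "[n ^ (e ^ j) = 1] (mod p)" using fermat1[of n j] n by blast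
  have "[n ^ (e ^ j) = c] (mod p)"
    using cong_trans[OF n1 cong_sym[OF c1]] .
  then obtain k where "n ^ (e ^ j) = k * p + c" using cong_le_nat[OF cle] by blast
  then have "n ^ (e ^ j) \<in> T" using plusk[OF cT, of k] by (simp add: add.commute)
  then show "n \<in> T" using roots n by auto
qed

lemma key_ord:
  fixes p q e t x :: nat
  assumes p: "prime p" and q: "prime q" "\<not> q dvd e" and pt: "p - 1 = q * t"
    and x: "\<not> p dvd x"
  shows "[x ^ t = 1] (mod p) \<longleftrightarrow> [(x ^ e) ^ t = 1] (mod p)"
proof
  assume "[x ^ t = 1] (mod p)"
  then have "[(x ^ t) ^ e = 1 ^ e] (mod p)" using cong_pow by blast
  then show "[(x ^ e) ^ t = 1] (mod p)" by (simp add: power_mult[symmetric] mult.commute)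
next
  assume a: "[(x ^ e) ^ t = 1] (mod p)"
  have "(x ^ e) ^ t = (x ^ t) ^ e" by (simp add: power_mult[symmetric] mult.commute)
  then have d1: "ord p (x ^ t) dvd e" using a ord_divides by metis
  have "[(x ^ t) ^ q = 1] (mod p)"
    using fermat_theorem[OF p x] pt by (simp add: power_mult[symmetric] mult.commute)
  then have d2: "ord p (x ^ t) dvd q" using ord_divides by metis
  have "coprime q e" using q prime_imp_coprime by blast
  then have "ord p (x ^ t) dvd 1" using d1 d2
    using coprime_common_divisor[of q e "ord p (x ^ t)"] by blast
  then have "ord p (x ^ t) dvd 1" by simp
  then show "[x ^ t = 1] (mod p)" using ord_divides by (metis power_one_right)
qed

lemma nec:
  fixes p r e :: nat
  assumes p: "prime p" and r: "r \<ge> 2" "\<not> p dvd r" and e: "2 \<le> e" "e \<le> p - 2"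
    and SU: "S p e r = {n. n \<ge> 2 \<and> \<not> p dvd n}"
  shows "\<not> squarefree (p - 1)"
proof
  assume sf: "squarefree (p - 1)"
  define g where "g = gcd e (p - 1)"
  have p4: "p \<ge> 4" using e by linarith
  have gdvd: "g dvd p - 1" unfolding g_def by simp
  have "\<not> (p - 1) dvd e" using e p4 by (auto dest: dvd_imp_le)
  then have "g \<noteq> p - 1" using gcd_dvd1[of e "p - 1"] unfolding g_def by metis
  obtain m2 where m2: "p - 1 = g * m2" using gdvd by (auto simp: dvd_def)
  have "m2 \<noteq> 1" using m2 \<open>g \<noteq> p - 1\<close> by auto
  then obtain q where q: "prime q" "q dvd m2" using prime_factor_nat by blast
  have qe: "\<not> q dvd e"
  proof
    assume "q dvd e"
    moreover have "q dvd p - 1" using q m2 by simp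
    ultimately have "q dvd g" unfolding g_def by simp
    then have "q * q dvd g * m2" using q by (simp add: mult_dvd_mono)
    then have "q ^ 2 dvd p - 1" using m2 by (simp add: power2_eq_square)
    then have "q dvd 1" using squarefreeD[OF sf] by blast
    then show False using q by simp
  qed
  obtain k where k: "m2 = q * k" using q(2) by (auto simp: dvd_def)
  define t where "t = g * k"
  have pt: "p - 1 = q * t" unfolding t_def using m2 k by simp
  have t0: "t > 0" using pt p4 by (cases t) auto
  have tlt: "t < p - 1" using pt q(1) t0 prime_gt_1_nat[OF q(1)] p4 by simp
  define T where "T = {n. n \<ge> 2 \<and> \<not> p dvd n \<and> ([n ^ t = 1] (mod p) \<longleftrightarrow> [r ^ t = 1] (mod p))}"
  have cl: "closed_set p e r T"
    unfolding closed_set_def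
  proof (intro conjI allI impI ballI)
    show "T \<subseteq> {n. n > 0}" unfolding T_def by auto
    show "r \<in> T" unfolding T_def using r by auto
  next
    fix n :: nat assume n: "n > 0" "n ^ e \<in> T"
    have "n \<noteq> 1" using n unfolding T_def by auto
    moreover have nd: "\<not> p dvd n" using n e p unfolding T_def by (auto simp: prime_dvd_power_iff)
    ultimately show "n \<in> T" using n key_ord[OF p q(1) qe pt nd] unfolding T_def by auto
  next
    fix n :: nat assume n: "n \<in> T"
    have "n + p \<le> (n + p) ^ e" using e n unfolding T_def by (intro self_le_power) auto
    moreover have nd: "\<not> p dvd (n + p)" using n unfolding T_def by simp
    moreover have "\<not> p dvd (n + p) ^ e" using nd p e by (simp add: prime_dvd_power_iff)
    moreover have "[(n + p) ^ t = 1] (mod p) \<longleftrightarrow> [n ^ t = 1] (mod p)"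
    proof -
      have "[(n + p) ^ t = n ^ t] (mod p)" using cong_pow cong_plus_p by blast
      then show ?thesis using cong_trans cong_sym by blast
    qed
    ultimately show "(n + p) ^ e \<in> T" using n key_ord[OF p q(1) qe pt nd] unfolding T_def by auto
  qed
  have UT: "{n. n \<ge> 2 \<and> \<not> p dvd n} \<subseteq> T" using S_lower[OF cl] SU by simp
  have "\<not> p dvd p + 1"
  proof
    assume "p dvd p + 1"
    then have "p dvd 1" using dvd_add_right_iff[of p p 1] by simp
    then show False using p4 by simp
  qed
  then have "p + 1 \<in> T" using UT p4 by auto
  moreover have "[(1 + p) ^ t = 1 ^ t] (mod p)" using cong_pow cong_plus_p by blast
  ultimately have r1: "[r ^ t = 1] (mod p)" unfolding T_def by (simp add: add.commute)
  obtain g0 where g0: "residue_primroot p g0" using prime_primitive_root_exists[OF prime_gt_1_nat[OF p] p] by blast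
  then have cg: "coprime p g0" and og: "ord p g0 = p - 1"
    unfolding residue_primroot_def using totient_prime[OF p] by auto
  have nd: "\<not> p dvd g0 + p"
  proof
    assume "p dvd g0 + p"
    then have "p dvd g0" using dvd_add_left_iff[of p p g0] by simp
    then have "is_unit p" using coprime_common_divisor[OF cg, of p] by simp
    then show False using p by (simp add: not_prime_unit)
  qed
  have "g0 + p \<in> T" using UT nd p4 by auto
  then have "[(g0 + p) ^ t = 1] (mod p)" using r1 unfolding T_def by auto
  moreover have "[(g0 + p) ^ t = g0 ^ t] (mod p)" using cong_pow cong_plus_p by blast
  ultimately have "[g0 ^ t = 1] (mod p)" using cong_trans cong_sym by blast
  then have "p - 1 dvd t" using og ord_divides[of g0 t p] by simp
  then show False using t0 tlt by (auto dest: dvd_imp_le)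
qed

theorem corollary22:
  fixes p r :: nat
  assumes "prime p" and "r \<ge> 2" and "\<not> p dvd r"
  shows "(\<exists>e::nat. 2 \<le> e \<and> e \<le> p - 2 \<and> S p e r = {n. n \<ge> 2 \<and> \<not> p dvd n})
         \<longleftrightarrow> \<not> squarefree (p - 1)"
proof
  assume "\<exists>e::nat. 2 \<le> e \<and> e \<le> p - 2 \<and> S p e r = {n. n \<ge> 2 \<and> \<not> p dvd n}"
  then show "\<not> squarefree (p - 1)" using nec assms by blast
next
  assume "\<not> squarefree (p - 1)"
  then obtain q where q: "q ^ 2 dvd p - 1" "\<not> q dvd 1"
    unfolding squarefree_def by auto
  have p1: "p - 1 > 0" using assms(1) prime_gt_1_nat by simp
  have "q \<noteq> 0"
  proof
    assume "q = 0"
    then have "p - 1 = 0" using q(1) by simp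
    then show False using p1 by simp
  qed
  moreover have "q \<noteq> 1" using q by auto
  ultimately have q2: "q \<ge> 2" by linarith
  obtain k where k: "p - 1 = q ^ 2 * k" using q(1) by (rule dvdE)
  define e where "e = q * k"
  have pe: "p - 1 = q * e" unfolding e_def using k by (simp add: power2_eq_square mult.assoc)
  have qe: "q dvd e" unfolding e_def by simp
  have "e \<noteq> 0" using pe p1 by auto
  then have e2: "e \<ge> q" using qe by (auto dest: dvd_imp_le)
  have e2': "e \<ge> 2" using e2 q2 by linarith
  have "2 * e \<le> q * e" using q2 by (rule mult_le_mono1)
  then have ep: "e \<le> p - 2" using pe e2' by linarith
  have dv: "(p - 1) dvd e * e" unfolding pe using mult_dvd_mono[OF qe dvd_refl[of e]] .
  have "S p e r = {n. n \<ge> 2 \<and> \<not> p dvd n}"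
  proof
    show "S p e r \<subseteq> {n. n \<ge> 2 \<and> \<not> p dvd n}"
      using S_sub_U[OF assms, of e] e2' by linarith
    show "{n. n \<ge> 2 \<and> \<not> p dvd n} \<subseteq> S p e r"
      by (rule S_upper) (rule suff[OF assms e2' dv])
  qed
  then show "\<exists>e::nat. 2 \<le> e \<and> e \<le> p - 2 \<and> S p e r = {n. n \<ge> 2 \<and> \<not> p dvd n}"
    using e2' ep by blast
qed

end
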